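(* Let $I \subseteq R$ be a nonzero $\mathscr{D}(R,V)$-submodule of $R$. There exists a natural number $\ell \geq 0$ such that $I = \pi^\ell R$.
   Context: Let $(V, \pi V, k)$ be a DVR of mixed characteristic $(0,p)$ (i.e. $V$ has characteristic zero, maximal ideal generated by $\pi$, and residue field $k$ of characteristic $p>0$), and let $R$ be either $V[[x_1, \ldots, x_n]]$ or $V[x_1, \ldots, x_n]$ for some $n \geq 0$. $\mathscr{D}(R,V)$ denotes the ring of $V$-linear differential operators on $R$; it is generated over $R$ by the operators $\partial_i^{[t]} = \frac{1}{t!}\frac{\partial^t}{\partial x_i^t}$. *)

theory Defs
  imports Main
begin

definition dvr_uniformizer :: "'a::idom \<Rightarrow> bool" where
  "dvr_uniformizer pi \<longleftrightarrow> pi \<noteq> 0 \<and> \<not> pi dvd 1 \<and>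
     (\<forall>a. a \<noteq> 0 \<longrightarrow> (\<exists>u k. u dvd 1 \<and> a = u * pi ^ k))"

definition residue_char_pos :: "'a::idom \<Rightarrow> bool" where
  "residue_char_pos pi \<longleftrightarrow> (\<exists>p::nat. p > 0 \<and> pi dvd of_nat p)"

text \<open>Elements of V[[x_0..x_{n-1}]] are coefficient functions on exponent vectors
  alpha :: nat => nat vanishing outside {0..<n}.\<close>
definition PS :: "nat \<Rightarrow> ((nat \<Rightarrow> nat) \<Rightarrow> 'a::idom) set" where
  "PS n = {f. \<forall>\<alpha>. (\<exists>i\<ge>n. \<alpha> i \<noteq> 0) \<longrightarrow> f \<alpha> = 0}"

definition Poly :: "nat \<Rightarrow> ((nat \<Rightarrow> nat) \<Rightarrow> 'a::idom) set" where
  "Poly n = {f \<in> PS n. finite {\<alpha>. f \<alpha> \<noteq> 0}}"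

definition ps_mult :: "((nat \<Rightarrow> nat) \<Rightarrow> 'a::idom) \<Rightarrow> ((nat \<Rightarrow> nat) \<Rightarrow> 'a) \<Rightarrow> (nat \<Rightarrow> nat) \<Rightarrow> 'a" where
  "ps_mult f g \<gamma> = (\<Sum>\<alpha>\<in>{\<alpha>. \<forall>i. \<alpha> i \<le> \<gamma> i}. f \<alpha> * g (\<lambda>i. \<gamma> i - \<alpha> i))"

text \<open>Divided-power derivative partial_i^{[t]} = (1/t!) d^t/dx_i^t:
  x^beta maps to (beta_i choose t) x^(beta - t e_i).\<close>
definition divided_deriv :: "nat \<Rightarrow> nat \<Rightarrow> ((nat \<Rightarrow> nat) \<Rightarrow> 'a::idom) \<Rightarrow> (nat \<Rightarrow> nat) \<Rightarrow> 'a" where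
  "divided_deriv i t f \<alpha> = of_nat ((\<alpha> i + t) choose t) * f (\<alpha>(i := \<alpha> i + t))"

text \<open>A D(R,V)-submodule of R: an R-submodule (ideal) of R stable under all
  generators partial_i^{[t]} (i < n) of D(R,V) over R.\<close>
definition D_submodule :: "nat \<Rightarrow> ((nat \<Rightarrow> nat) \<Rightarrow> 'a::idom) set \<Rightarrow> ((nat \<Rightarrow> nat) \<Rightarrow> 'a) set \<Rightarrow> bool" where
  "D_submodule n R I \<longleftrightarrow> I \<subseteq> R \<and> (\<lambda>_. 0) \<in> I \<and>
     (\<forall>f\<in>I. \<forall>g\<in>I. (\<lambda>\<alpha>. f \<alpha> + g \<alpha>) \<in> I) \<and>
     (\<forall>r\<in>R. \<forall>f\<in>I. ps_mult r f \<in> I) \<and>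
     (\<forall>i<n. \<forall>t. \<forall>f\<in>I. divided_deriv i t f \<in> I)"

end

theory Submission imports Defs begin

definition sp :: "nat \<Rightarrow> (nat \<Rightarrow> nat) \<Rightarrow> bool" where
  "sp n \<alpha> \<longleftrightarrow> (\<forall>i\<ge>n. \<alpha> i = 0)"

definition cst :: "'a::idom \<Rightarrow> (nat \<Rightarrow> nat) \<Rightarrow> 'a" where
  "cst c = (\<lambda>\<alpha>. if \<alpha> = (\<lambda>_. 0) then c else 0)"

definition dg :: "nat \<Rightarrow> (nat \<Rightarrow> nat) \<Rightarrow> nat" where
  "dg n \<alpha> = (\<Sum>i<n. \<alpha> i)"

lemma PS_sp: "f \<in> PS n \<Longrightarrow> \<not> sp n \<alpha> \<Longrightarrow> f \<alpha> = 0"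
  unfolding PS_def sp_def by auto

lemma fin_below:
  assumes "sp n \<gamma>" shows "finite {\<alpha>. \<forall>i. \<alpha> i \<le> \<gamma> i}"
proof -
  let ?S = "{\<alpha>. \<forall>i. \<alpha> i \<le> \<gamma> i}"
  have inj: "inj_on (\<lambda>\<alpha>. map \<alpha> [0..<n]) ?S"
  proof (rule inj_onI)
    fix a b assume a: "a \<in> ?S" and b: "b \<in> ?S" and e: "map a [0..<n] = map b [0..<n]"
    show "a = b"
    proof
      fix i show "a i = b i"
      proof (cases "i < n")
        case True
        have "map a [0..<n] ! i = map b [0..<n] ! i" by (simp only: e)
        then show ?thesis using True by simp
      next
        case False
        have g0: "\<gamma> i = 0" using assms False unfolding sp_def by simp
        have "a i \<le> \<gamma> i" "b i \<le> \<gamma> i" using a b by auto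
        then show ?thesis using g0 by simp
      qed
    qed
  qed
  have "(\<lambda>\<alpha>. map \<alpha> [0..<n]) ` ?S \<subseteq> {xs. set xs \<subseteq> {0..dg n \<gamma>} \<and> length xs = n}"
  proof clarsimp
    fix a x assume a: "\<forall>i. a i \<le> \<gamma> i" and "x < n"
    then have "\<gamma> x \<le> dg n \<gamma>" unfolding dg_def by (intro member_le_sum) auto
    then show "a x \<le> dg n \<gamma>" using a order_trans by blast
  qed
  moreover have "finite {xs. set xs \<subseteq> {0..dg n \<gamma>} \<and> length xs = n}"
    by (rule finite_lists_length_eq) simp
  ultimately have "finite ((\<lambda>\<alpha>. map \<alpha> [0..<n]) ` ?S)" by (rule finite_subset)
  then show ?thesis using inj finite_image_iff by blast
qed

lemma not_sp_infinite: "\<not> finite {\<alpha>. \<forall>i. \<alpha> i \<le> \<gamma> i} \<Longrightarrow> \<not> sp n \<gamma>"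
  using fin_below by blast

lemma ps_mult_cst_right:
  assumes "f \<in> PS n" shows "ps_mult f (cst c) = (\<lambda>\<gamma>. f \<gamma> * c)"
proof
  fix \<gamma> :: "nat \<Rightarrow> nat"
  let ?S = "{\<alpha>. \<forall>i. \<alpha> i \<le> \<gamma> i}"
  have t: "\<And>\<alpha>. \<alpha> \<in> ?S \<Longrightarrow> f \<alpha> * cst c (\<lambda>i. \<gamma> i - \<alpha> i) = (if \<alpha> = \<gamma> then f \<gamma> * c else 0)"
  proof -
    fix \<alpha> assume "\<alpha> \<in> ?S"
    then have "((\<lambda>i. \<gamma> i - \<alpha> i) = (\<lambda>_. 0)) = (\<alpha> = \<gamma>)"
      by (auto simp: fun_eq_iff) (metis diff_is_0_eq le_antisym)
    then show "f \<alpha> * cst c (\<lambda>i. \<gamma> i - \<alpha> i) = (if \<alpha> = \<gamma> then f \<gamma> * c else 0)"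
      unfolding cst_def by auto
  qed
  show "ps_mult f (cst c) \<gamma> = f \<gamma> * c"
  proof (cases "finite ?S")
    case True
    have "ps_mult f (cst c) \<gamma> = (\<Sum>\<alpha>\<in>?S. if \<alpha> = \<gamma> then f \<gamma> * c else 0)"
      unfolding ps_mult_def using t by (rule sum.cong[OF refl])
    also have "\<dots> = f \<gamma> * c" using True by (simp add: sum.delta')
    finally show ?thesis .
  next
    case False
    then have "f \<gamma> = 0" using not_sp_infinite PS_sp assms by blast
    then show ?thesis using False unfolding ps_mult_def by simp
  qed
qed

lemma ps_mult_cst_left:
  assumes "f \<in> PS n" shows "ps_mult (cst c) f = (\<lambda>\<gamma>. c * f \<gamma>)"
proof
  fix \<gamma> :: "nat \<Rightarrow> nat"
  let ?S = "{\<alpha>. \<forall>i. \<alpha> i \<le> \<gamma> i}"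
  have t: "\<And>\<alpha>. \<alpha> \<in> ?S \<Longrightarrow> cst c \<alpha> * f (\<lambda>i. \<gamma> i - \<alpha> i) = (if \<alpha> = (\<lambda>_. 0) then c * f \<gamma> else 0)"
    unfolding cst_def by auto
  show "ps_mult (cst c) f \<gamma> = c * f \<gamma>"
  proof (cases "finite ?S")
    case True
    have "ps_mult (cst c) f \<gamma> = (\<Sum>\<alpha>\<in>?S. if \<alpha> = (\<lambda>_. 0) then c * f \<gamma> else 0)"
      unfolding ps_mult_def using t by (rule sum.cong[OF refl])
    also have "\<dots> = c * f \<gamma>" using True by (simp add: sum.delta')
    finally show ?thesis .
  next
    case False
    then have "f \<gamma> = 0" using not_sp_infinite PS_sp assms by blast
    then show ?thesis using False unfolding ps_mult_def by simp
  qed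
qed

lemma cst_Poly: "cst c \<in> Poly n"
proof -
  have "{\<alpha>. cst c \<alpha> \<noteq> 0} \<subseteq> {\<lambda>_. 0}" unfolding cst_def by auto
  then have "finite {\<alpha>. cst c \<alpha> \<noteq> 0}" by (rule finite_subset) simp
  moreover have "cst c \<in> PS n" unfolding PS_def cst_def by auto
  ultimately show ?thesis unfolding Poly_def by simp
qed

lemma Poly_PS: "Poly n \<subseteq> PS n" unfolding Poly_def by auto

fun Dit :: "nat \<Rightarrow> (nat \<Rightarrow> nat) \<Rightarrow> ((nat \<Rightarrow> nat) \<Rightarrow> 'a::idom) \<Rightarrow> (nat \<Rightarrow> nat) \<Rightarrow> 'a" where
  "Dit 0 \<beta> f = f"
| "Dit (Suc m) \<beta> f = divided_deriv m (\<beta> m) (Dit m \<beta> f)"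

lemma Dit_formula:
  "Dit m \<beta> f \<alpha> = (\<Prod>i<m. of_nat ((\<alpha> i + \<beta> i) choose \<beta> i)) * f (\<lambda>i. if i < m then \<alpha> i + \<beta> i else \<alpha> i)"
proof (induction m arbitrary: \<alpha>)
  case 0 then show ?case by simp
next
  case (Suc m)
  have e1: "(\<Prod>i<m. of_nat (((\<alpha>(m := \<alpha> m + \<beta> m)) i + \<beta> i) choose \<beta> i)) = (\<Prod>i<m. (of_nat ((\<alpha> i + \<beta> i) choose \<beta> i) :: 'a))"
    by (rule prod.cong) auto
  have e2: "(\<lambda>i. if i < m then (\<alpha>(m := \<alpha> m + \<beta> m)) i + \<beta> i else (\<alpha>(m := \<alpha> m + \<beta> m)) i) = (\<lambda>i. if i < Suc m then \<alpha> i + \<beta> i else \<alpha> i)"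
    by (auto simp: fun_eq_iff less_Suc_eq)
  show ?case by (simp add: divided_deriv_def Suc e1 e2 mult.assoc mult.left_commute)
qed

lemma Dit_in:
  assumes "D_submodule n R I" "f \<in> I" "m \<le> n" shows "Dit m \<beta> f \<in> I"
  using assms(3)
proof (induction m)
  case 0 then show ?case using assms by simp
next
  case (Suc m) then show ?case using assms(1) unfolding D_submodule_def by simp
qed

lemma dg_less:
  assumes "sp n \<gamma>" "\<forall>i. \<alpha> i \<le> \<gamma> i" "\<alpha> \<noteq> \<gamma>"
  shows "dg n \<alpha> < dg n \<gamma>"
proof -
  obtain i where i: "\<alpha> i \<noteq> \<gamma> i" using assms(3) by auto
  have "i < n" using i assms(1,2) unfolding sp_def by (metis le0 le_antisym not_le)
  have "\<exists>a\<in>{..<n}. \<alpha> a < \<gamma> a" using i \<open>i < n\<close> assms(2) le_neq_implies_less by blast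
  then have "sum \<alpha> {..<n} < sum \<gamma> {..<n}"
    by (intro sum_strict_mono_ex1) (auto simp: assms(2))
  then show ?thesis unfolding dg_def .
qed

function kinv :: "nat \<Rightarrow> 'a::idom \<Rightarrow> ((nat \<Rightarrow> nat) \<Rightarrow> 'a) \<Rightarrow> (nat \<Rightarrow> nat) \<Rightarrow> 'a" where
  "kinv n c h \<gamma> = (if \<not> sp n \<gamma> then 0 else if \<gamma> = (\<lambda>_. 0) then c else
     - c * (\<Sum>\<alpha>\<in>{\<alpha>. (\<forall>i. \<alpha> i \<le> \<gamma> i) \<and> \<alpha> \<noteq> \<gamma>}. kinv n c h \<alpha> * h (\<lambda>i. \<gamma> i - \<alpha> i)))"
  by auto
termination
  by (relation "measure (\<lambda>(n,c,h,\<gamma>). dg n \<gamma>)") (auto intro: dg_less)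

declare kinv.simps[simp del]

lemma kinv_PS: "kinv n c h \<in> PS n"
  unfolding PS_def by (auto simp: kinv.simps sp_def)

lemma aux_alg: "(k::'a::idom) = - c * T \<Longrightarrow> c * h0 = 1 \<Longrightarrow> k * h0 + T = 0"
  by (simp add: algebra_simps)

lemma kinv_prop:
  assumes c: "c * h (\<lambda>_. 0) = 1" and sp: "sp n \<gamma>"
  shows "(\<Sum>\<alpha>\<in>{\<alpha>. \<forall>i. \<alpha> i \<le> \<gamma> i}. kinv n c h \<alpha> * h (\<lambda>i. \<gamma> i - \<alpha> i)) = (if \<gamma> = (\<lambda>_. 0) then 1 else 0)"
proof -
  let ?S = "{\<alpha>. \<forall>i. \<alpha> i \<le> \<gamma> i}"
  let ?S' = "{\<alpha>. (\<forall>i. \<alpha> i \<le> \<gamma> i) \<and> \<alpha> \<noteq> \<gamma>}"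
  let ?T = "\<Sum>\<alpha>\<in>?S'. kinv n c h \<alpha> * h (\<lambda>i. \<gamma> i - \<alpha> i)"
  have fin: "finite ?S" using fin_below[OF sp] .
  have Seq: "?S = insert \<gamma> ?S'" by auto
  have fin': "finite ?S'" using fin by (rule finite_subset[rotated]) auto
  have zz: "(\<lambda>i. \<gamma> i - \<gamma> i) = (\<lambda>_. 0::nat)" by simp
  have nin: "\<gamma> \<notin> ?S'" by simp
  have "(\<Sum>\<alpha>\<in>?S. kinv n c h \<alpha> * h (\<lambda>i. \<gamma> i - \<alpha> i)) = (\<Sum>\<alpha>\<in>insert \<gamma> ?S'. kinv n c h \<alpha> * h (\<lambda>i. \<gamma> i - \<alpha> i))"
    by (simp only: Seq)
  also have "\<dots> = kinv n c h \<gamma> * h (\<lambda>i. \<gamma> i - \<gamma> i) + ?T"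
    by (rule sum.insert[OF fin' nin])
  also have "\<dots> = kinv n c h \<gamma> * h (\<lambda>_. 0) + ?T"
    by (simp only: zz)
  also have "\<dots> = (if \<gamma> = (\<lambda>_. 0) then 1 else 0)"
  proof (cases "\<gamma> = (\<lambda>_. 0)")
    case True
    then have "?S' = {}" by (auto simp: fun_eq_iff)
    then have T0: "?T = 0" by (simp only: sum.empty)
    have "kinv n c h (\<lambda>_. 0) = c" by (simp add: kinv.simps[of n c h "\<lambda>_. 0"] sp_def)
    then have k: "kinv n c h \<gamma> = c" using True by simp
    have e1: "kinv n c h \<gamma> * h (\<lambda>_. 0) + ?T = c * h (\<lambda>_. 0)"
      by (simp only: k T0 add_0_right)
    have e2: "(if \<gamma> = (\<lambda>_. 0) then 1 else 0) = (1::'a)" using if_P[OF True] .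
    show ?thesis unfolding e1 e2 using c .
  next
    case False
    have k: "kinv n c h \<gamma> = - c * ?T"
      by (subst kinv.simps) (simp only: False sp if_False if_True not_True_eq_False)
    have "kinv n c h \<gamma> * h (\<lambda>_. 0) + ?T = 0"
      using aux_alg[OF k c] .
    then show ?thesis using False by (simp only: if_False)
  qed
  finally show ?thesis .
qed

lemma Dsub_facts:
  assumes "D_submodule n R I"
  shows "I \<subseteq> R" "(\<lambda>_. 0) \<in> I" "\<And>f g. f \<in> I \<Longrightarrow> g \<in> I \<Longrightarrow> (\<lambda>\<alpha>. f \<alpha> + g \<alpha>) \<in> I"
    "\<And>r f. r \<in> R \<Longrightarrow> f \<in> I \<Longrightarrow> ps_mult r f \<in> I"
  using assms unfolding D_submodule_def by auto

lemma sp_zero: "sp n (\<lambda>_. 0)" unfolding sp_def by simp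

lemma Dit_zero:
  assumes "sp n \<beta>" shows "Dit n \<beta> f (\<lambda>_. 0) = f \<beta>"
proof -
  have "(\<lambda>i. if i < n then 0 + \<beta> i else (0::nat)) = \<beta>"
    using assms unfolding sp_def by (auto simp: fun_eq_iff)
  then show ?thesis by (simp add: Dit_formula)
qed

lemma cst_zero: "cst (0::'a::idom) = (\<lambda>_. 0)" unfolding cst_def by auto

lemma dg_add:
  "dg n (\<lambda>i. if i < n then \<alpha> i + \<beta> i else \<alpha> i) = dg n \<alpha> + dg n \<beta>"
  unfolding dg_def by (simp add: sum.distrib)

lemma sp_nonzero: "sp n \<alpha> \<Longrightarrow> \<alpha> \<noteq> (\<lambda>_. 0) \<Longrightarrow> dg n \<alpha> > 0"
proof -
  assume s: "sp n \<alpha>" and nz: "\<alpha> \<noteq> (\<lambda>_. 0)"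
  then obtain i where i: "\<alpha> i \<noteq> 0" by auto
  then have "i < n" using s unfolding sp_def by (meson not_le)
  have "\<alpha> i \<le> dg n \<alpha>" unfolding dg_def using \<open>i < n\<close> by (intro member_le_sum) auto
  then show ?thesis using i by simp
qed

lemma poly_coeffs:
  assumes D: "D_submodule n (Poly n) I"
  shows "f \<in> I \<Longrightarrow> cst (f \<beta>) \<in> I"
proof (induction "card {\<alpha>. f \<alpha> \<noteq> 0}" arbitrary: f \<beta> rule: less_induct)
  case less
  note F = Dsub_facts[OF D]
  have fP: "f \<in> Poly n" using less.prems F(1) by auto
  then have fPS: "f \<in> PS n" and fin: "finite {\<alpha>. f \<alpha> \<noteq> 0}" unfolding Poly_def by auto
  show ?case
  proof (cases "{\<alpha>. f \<alpha> \<noteq> 0} = {}")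
    case True
    then have "f \<beta> = 0" by auto
    then show ?thesis using F(2) by (simp add: cst_zero)
  next
    case False
    let ?S = "{\<alpha>. f \<alpha> \<noteq> 0}"
    define m where "m = Max (dg n ` ?S)"
    have "m \<in> dg n ` ?S" unfolding m_def using fin False by (intro Max_in) auto
    then obtain \<beta>0 where b0: "f \<beta>0 \<noteq> 0" and mb: "dg n \<beta>0 = m" by auto
    have maxb: "\<And>\<gamma>. f \<gamma> \<noteq> 0 \<Longrightarrow> dg n \<gamma> \<le> dg n \<beta>0"
      unfolding mb m_def using fin by (intro Max_ge) auto
    have spb: "sp n \<beta>0" using b0 fPS PS_sp by blast
    have Dc: "Dit n \<beta>0 f = cst (f \<beta>0)"
    proof
      fix \<alpha> :: "nat \<Rightarrow> nat"
      show "Dit n \<beta>0 f \<alpha> = cst (f \<beta>0) \<alpha>"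
      proof (cases "\<alpha> = (\<lambda>_. 0)")
        case True then show ?thesis using Dit_zero[OF spb] unfolding cst_def by simp
      next
        case False
        let ?a = "\<lambda>i. if i < n then \<alpha> i + \<beta>0 i else \<alpha> i"
        have "f ?a = 0"
        proof (cases "sp n \<alpha>")
          case True
          have "dg n ?a > dg n \<beta>0" using dg_add[of n \<alpha> \<beta>0] sp_nonzero[OF True False] by simp
          then show ?thesis using maxb by (meson not_le)
        next
          case nsp: False
          have "\<not> sp n ?a" using nsp unfolding sp_def by auto
          then show ?thesis using fPS PS_sp by blast
        qed
        then show ?thesis using False unfolding Dit_formula cst_def by simp
      qed
    qed
    have c0: "cst (f \<beta>0) \<in> I" using Dit_in[OF D less.prems, of n \<beta>0] Dc by simp
    define e :: "(nat \<Rightarrow> nat) \<Rightarrow> 'a" where "e = (\<lambda>\<gamma>. if \<gamma> = \<beta>0 then 1 else 0)"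
    have eP: "e \<in> Poly n"
    proof -
      have "{\<alpha>. e \<alpha> \<noteq> 0} \<subseteq> {\<beta>0}" unfolding e_def by auto
      then have "finite {\<alpha>. e \<alpha> \<noteq> 0}" by (rule finite_subset) simp
      moreover have "e \<in> PS n" using spb unfolding PS_def e_def sp_def by auto
      ultimately show ?thesis unfolding Poly_def by simp
    qed
    have mono: "(\<lambda>\<gamma>. e \<gamma> * f \<beta>0) \<in> I"
    proof -
      have "e \<in> PS n" using eP Poly_PS by blast
      then show ?thesis using F(4)[OF eP c0] ps_mult_cst_right[of e n "f \<beta>0"] by simp
    qed
    have monoPS: "(\<lambda>\<gamma>. e \<gamma> * f \<beta>0) \<in> PS n" using mono F(1) Poly_PS by auto
    have neg: "(\<lambda>\<gamma>. - 1 * (e \<gamma> * f \<beta>0)) \<in> I"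
    proof -
      have n1: "ps_mult (cst (- 1)) (\<lambda>\<gamma>. e \<gamma> * f \<beta>0) \<in> I" using F(4)[OF cst_Poly mono] .
      have n2: "ps_mult (cst (- 1)) (\<lambda>\<gamma>. e \<gamma> * f \<beta>0) = (\<lambda>\<gamma>. - 1 * (e \<gamma> * f \<beta>0))"
        by (rule ps_mult_cst_left[OF monoPS])
      show ?thesis using n1 unfolding n2 .
    qed
    define f' where "f' = (\<lambda>\<alpha>. f \<alpha> + - 1 * (e \<alpha> * f \<beta>0))"
    have f'I: "f' \<in> I" unfolding f'_def using F(3)[OF less.prems neg] .
    have f'eq: "\<And>\<alpha>. f' \<alpha> = (if \<alpha> = \<beta>0 then 0 else f \<alpha>)" unfolding f'_def e_def by simp
    have supp: "{\<alpha>. f' \<alpha> \<noteq> 0} = ?S - {\<beta>0}" using f'eq by auto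
    have "card {\<alpha>. f' \<alpha> \<noteq> 0} < card ?S"
      unfolding supp using fin b0 by (intro card_Diff1_less) auto
    then have IH: "cst (f' \<beta>) \<in> I" using less.hyps f'I by blast
    show ?thesis
    proof (cases "\<beta> = \<beta>0")
      case True then show ?thesis using c0 by simp
    next
      case False then show ?thesis using IH f'eq by simp
    qed
  qed
qed

theorem theorem3p2:
  fixes pi :: "'a::{idom, ring_char_0}" and n :: nat
    and R I :: "((nat \<Rightarrow> nat) \<Rightarrow> 'a) set"
  assumes "dvr_uniformizer pi"
    and "residue_char_pos pi"
    and "R = PS n \<or> R = Poly n"
    and "D_submodule n R I"
    and "I \<noteq> {\<lambda>_. 0}"
  shows "\<exists>l::nat. I = {(\<lambda>\<alpha>. pi ^ l * f \<alpha>) | f. f \<in> R}"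
proof -
  note F = Dsub_facts[OF assms(4)]
  have RPS: "R \<subseteq> PS n" using assms(3) Poly_PS by auto
  have cstR: "\<And>c. cst c \<in> R" using assms(3) cst_Poly Poly_PS by auto
  have pi0: "pi \<noteq> 0" using assms(1) unfolding dvr_uniformizer_def by simp
  have dvr: "\<And>a. a \<noteq> 0 \<Longrightarrow> \<exists>u k. u dvd 1 \<and> a = u * pi ^ k"
    using assms(1) unfolding dvr_uniformizer_def by simp
  obtain f0 where f0: "f0 \<in> I" "f0 \<noteq> (\<lambda>_. 0)" using assms(5) F(2) by blast
  then obtain b0 where "f0 b0 \<noteq> 0" by auto
  then obtain u0 k0 where "u0 dvd 1" "f0 b0 = u0 * pi ^ k0" using dvr by blast
  define P where "P k \<longleftrightarrow> (\<exists>f\<in>I. \<exists>\<beta> u. u dvd 1 \<and> f \<beta> = u * pi ^ k)" for k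
  have Pk0: "P k0" unfolding P_def using f0(1) \<open>u0 dvd 1\<close> \<open>f0 b0 = u0 * pi ^ k0\<close> by blast
  define l where "l = (LEAST k. P k)"
  have "P l" unfolding l_def using Pk0 by (rule LeastI)
  then obtain f \<beta> u where fI: "f \<in> I" and u: "u dvd 1" and fb: "f \<beta> = u * pi ^ l"
    unfolding P_def by blast
  have ClaimA: "\<And>g \<alpha>. g \<in> I \<Longrightarrow> pi ^ l dvd g \<alpha>"
  proof -
    fix g \<alpha> assume gI: "g \<in> I"
    show "pi ^ l dvd g \<alpha>"
    proof (cases "g \<alpha> = 0")
      case False
      then obtain v k where "v dvd 1" "g \<alpha> = v * pi ^ k" using dvr by blast
      then have "P k" unfolding P_def using gI by blast
      then have "l \<le> k" unfolding l_def by (rule Least_le)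
      then have "pi ^ l dvd pi ^ k" by (rule le_imp_power_dvd)
      then show ?thesis using \<open>g \<alpha> = v * pi ^ k\<close> by simp
    qed simp
  qed
  obtain v where v: "v * u = 1" using u unfolding dvd_def by (metis mult.commute)
  have u0: "u \<noteq> 0" using v by auto
  have fb0: "f \<beta> \<noteq> 0" using fb u0 pi0 by simp
  have fPS: "f \<in> PS n" using fI F(1) RPS by auto
  have spb: "sp n \<beta>" using fb0 fPS PS_sp by blast
  have ClaimB: "cst (pi ^ l) \<in> I"
  proof (cases "R = PS n")
    case True
    define g where "g = Dit n \<beta> f"
    have gI: "g \<in> I" unfolding g_def using Dit_in[OF assms(4) fI le_refl] .
    have gPS: "g \<in> PS n" using gI F(1) RPS by auto
    have g0: "g (\<lambda>_. 0) = u * pi ^ l" unfolding g_def using Dit_zero[OF spb, of f] fb by (rule trans)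
    define h where "h = (\<lambda>\<alpha>. SOME q. g \<alpha> = pi ^ l * q)"
    have gh: "\<And>\<alpha>. g \<alpha> = pi ^ l * h \<alpha>"
    proof -
      fix \<alpha>
      have "\<exists>q. g \<alpha> = pi ^ l * q" using ClaimA[OF gI] unfolding dvd_def .
      then show "g \<alpha> = pi ^ l * h \<alpha>" unfolding h_def by (rule someI_ex)
    qed
    have pil0: "pi ^ l \<noteq> 0" using pi0 by simp
    have hPS: "h \<in> PS n"
      unfolding PS_def
    proof (intro CollectI allI impI)
      fix \<alpha> :: "nat \<Rightarrow> nat" assume "\<exists>i\<ge>n. \<alpha> i \<noteq> 0"
      then have "g \<alpha> = 0" using gPS unfolding PS_def by blast
      then show "h \<alpha> = 0" using gh[of \<alpha>] pil0 pi0 by simp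
    qed
    have "pi ^ l * h (\<lambda>_. 0) = g (\<lambda>_. 0)" using gh[of "\<lambda>_. 0"] by simp
    also have "\<dots> = pi ^ l * u" using g0 by (simp only: mult.commute)
    finally have h0: "h (\<lambda>_. 0) = u" using pil0 pi0 by simp
    have vh: "v * h (\<lambda>_. 0) = 1" using h0 v by simp
    define k where "k = kinv n v h"
    have kR: "k \<in> R" unfolding k_def using True kinv_PS by simp
    have mI: "ps_mult k g \<in> I" using F(4)[OF kR gI] .
    have mPS: "ps_mult k g \<in> PS n" using mI F(1) RPS by auto
    have "ps_mult k g = cst (pi ^ l)"
    proof
      fix \<gamma> :: "nat \<Rightarrow> nat"
      show "ps_mult k g \<gamma> = cst (pi ^ l) \<gamma>"
      proof (cases "sp n \<gamma>")
        case True
        have "ps_mult k g \<gamma> = (\<Sum>\<alpha>\<in>{\<alpha>. \<forall>i. \<alpha> i \<le> \<gamma> i}. pi ^ l * (k \<alpha> * h (\<lambda>i. \<gamma> i - \<alpha> i)))"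
          unfolding ps_mult_def gh by (simp only: mult.left_commute)
        also have "\<dots> = pi ^ l * (\<Sum>\<alpha>\<in>{\<alpha>. \<forall>i. \<alpha> i \<le> \<gamma> i}. k \<alpha> * h (\<lambda>i. \<gamma> i - \<alpha> i))"
          by (simp add: sum_distrib_left)
        also have "\<dots> = pi ^ l * (if \<gamma> = (\<lambda>_. 0) then 1 else 0)"
          unfolding k_def using kinv_prop[where c=v and h=h, OF vh True] by simp
        also have "\<dots> = cst (pi ^ l) \<gamma>" unfolding cst_def by simp
        finally show ?thesis .
      next
        case False
        then have "\<gamma> \<noteq> (\<lambda>_. 0)" using sp_zero by auto
        then show ?thesis using PS_sp[OF mPS False] unfolding cst_def by simp
      qed
    qed
    then show ?thesis using mI by simp
  next
    case False
    then have R: "R = Poly n" using assms(3) by simp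
    have c1: "cst (u * pi ^ l) \<in> I" using poly_coeffs[OF assms(4)[unfolded R] fI, of \<beta>] fb by simp
    have "cst (u * pi ^ l) \<in> PS n" using cst_Poly Poly_PS by blast
    then have "ps_mult (cst v) (cst (u * pi ^ l)) = (\<lambda>\<gamma>. v * cst (u * pi ^ l) \<gamma>)"
      by (rule ps_mult_cst_left)
    also have "\<dots> = cst (pi ^ l)"
      unfolding cst_def by (auto simp: mult.assoc[symmetric] v)
    finally show ?thesis using F(4)[OF cstR[of v] c1] by simp
  qed
  show ?thesis
  proof (intro exI[of _ l] equalityI subsetI)
    fix g assume gI: "g \<in> I"
    define g' where "g' = (\<lambda>\<alpha>. SOME q. g \<alpha> = pi ^ l * q)"
    have gg: "\<And>\<alpha>. g \<alpha> = pi ^ l * g' \<alpha>"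
    proof -
      fix \<alpha>
      have "\<exists>q. g \<alpha> = pi ^ l * q" using ClaimA[OF gI] unfolding dvd_def .
      then show "g \<alpha> = pi ^ l * g' \<alpha>" unfolding g'_def by (rule someI_ex)
    qed
    have nz: "\<And>\<alpha>. g' \<alpha> \<noteq> 0 \<Longrightarrow> g \<alpha> \<noteq> 0" using gg pi0 by simp
    have gR: "g \<in> R" using gI F(1) by auto
    have "g' \<in> R"
    proof (cases "R = PS n")
      case True
      then show ?thesis using gR nz unfolding PS_def by blast
    next
      case False
      then have R: "R = Poly n" using assms(3) by simp
      have "{\<alpha>. g' \<alpha> \<noteq> 0} \<subseteq> {\<alpha>. g \<alpha> \<noteq> 0}" using nz by auto
      moreover have "finite {\<alpha>. g \<alpha> \<noteq> 0}" using gR R unfolding Poly_def by auto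
      ultimately have "finite {\<alpha>. g' \<alpha> \<noteq> 0}" by (rule finite_subset)
      moreover have "g' \<in> PS n" using gR R nz unfolding PS_def Poly_def by blast
      ultimately show ?thesis using R unfolding Poly_def by simp
    qed
    moreover have "g = (\<lambda>\<alpha>. pi ^ l * g' \<alpha>)" using gg by auto
    ultimately show "g \<in> {(\<lambda>\<alpha>. pi ^ l * f \<alpha>) | f. f \<in> R}" by blast
  next
    fix g assume "g \<in> {(\<lambda>\<alpha>. pi ^ l * f \<alpha>) | f. f \<in> R}"
    then obtain r where r: "r \<in> R" and g: "g = (\<lambda>\<alpha>. pi ^ l * r \<alpha>)" by blast
    have "ps_mult r (cst (pi ^ l)) \<in> I" using F(4)[OF r ClaimB] .
    moreover have "ps_mult r (cst (pi ^ l)) = g"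
      using ps_mult_cst_right[of r n "pi ^ l"] r RPS g by (auto simp: mult.commute)
    ultimately show "g \<in> I" by simp
  qed
qed

end
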